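(* In the strategic parking problem on a weighted line graph, any (random) pricing function $P$ on the vacant slots that satisfies the Harmonic Payment Conditions ensures harmonic behaviour of an arriving car, regardless of its goal: if its goal is vacant it parks there; otherwise, letting $v_L,v_R$ be the nearest vacant slots to the left and right of its goal $v$, it parks at $v_L$ with probability $\frac{d(v,v_R)}{d(v,v_L)+d(v,v_R)}$ and at $v_R$ otherwise.
   Context: Parking slots are vertices on a line with path distances $d$; some are occupied and $V'$ is the set of vacant slots. An arriving car with goal vertex $g$ parks at a vacant slot $x$ minimizing $d(g,x)+P(x)$. A block is a maximal contiguous run of occupied slots; for a block $B_j$, $L(B_j)$ and $R(B_j)$ are the first vacant slots to its left and right, $d_j=d(L(B_j),R(B_j))$, and $D_j$ is the uniform distribution on $[-d_j,d_j]$. $P:V'\to\mathbb{R}_{\ge0}$ satisfies the Harmonic Payment Conditions if (1) for every block $B_j$, $P(L(B_j))-P(R(B_j))\sim D_j$; and (2) for any $u,v\in V'$ with no vacant slot between them, $-d(u,v)<P(u)-P(v)<d(u,v)$. *)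

theory Defs
  imports "HOL-Probability.Probability"
begin

text \<open>Weighted line graph on vertices 0,...,n-1; edge {k, k+1} has weight w k.
  Path distance between i and j.\<close>
definition dist_line :: "(nat \<Rightarrow> real) \<Rightarrow> nat \<Rightarrow> nat \<Rightarrow> real" where
  "dist_line w i j = (\<Sum>k\<in>{min i j..<max i j}. w k)"

definition vacant :: "nat \<Rightarrow> nat set \<Rightarrow> nat set" where
  "vacant n occ = {..<n} - occ"

definition is_block :: "nat \<Rightarrow> nat set \<Rightarrow> nat \<Rightarrow> nat \<Rightarrow> bool" where
  "is_block n occ a b \<longleftrightarrow> a \<le> b \<and> b < n \<and> {a..b} \<subseteq> occ \<and>
     (a = 0 \<or> a - 1 \<notin> occ) \<and> (b + 1 = n \<or> b + 1 \<notin> occ)"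

definition harmonic_payment ::
  "'w measure \<Rightarrow> nat \<Rightarrow> nat set \<Rightarrow> (nat \<Rightarrow> real) \<Rightarrow> ('w \<Rightarrow> nat \<Rightarrow> real) \<Rightarrow> bool" where
  "harmonic_payment M n occ w P \<longleftrightarrow>
     (\<forall>a b. is_block n occ a b \<and> 0 < a \<and> b + 1 < n \<longrightarrow>
        distr M lborel (\<lambda>\<omega>. P \<omega> (a - 1) - P \<omega> (b + 1))
          = uniform_measure lborel {- dist_line w (a - 1) (b + 1) .. dist_line w (a - 1) (b + 1)}) \<and>
     (AE \<omega> in M. \<forall>u\<in>vacant n occ. \<forall>v\<in>vacant n occ. u < v \<and> (\<forall>x\<in>{u<..<v}. x \<notin> vacant n occ) \<longrightarrow>
        - dist_line w u v < P \<omega> u - P \<omega> v \<and> P \<omega> u - P \<omega> v < dist_line w u v)"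

definition parks_at :: "nat \<Rightarrow> nat set \<Rightarrow> (nat \<Rightarrow> real) \<Rightarrow> (nat \<Rightarrow> real) \<Rightarrow> nat \<Rightarrow> nat \<Rightarrow> bool" where
  "parks_at n occ w p g x \<longleftrightarrow> x \<in> vacant n occ \<and>
     (\<forall>y\<in>vacant n occ. y \<noteq> x \<longrightarrow> dist_line w g x + p x < dist_line w g y + p y)"

end

theory Submission
  imports Defs
begin

lemma dl_sym: "dist_line w i j = dist_line w j i"
  unfolding dist_line_def by (simp add: min.commute max.commute)

lemma dl_add: "i \<le> j \<Longrightarrow> j \<le> k \<Longrightarrow> dist_line w i k = dist_line w i j + dist_line w j k"
  unfolding dist_line_def by (simp add: sum.atLeastLessThan_concat)

lemma dl_zero: "dist_line w i i = 0"
  unfolding dist_line_def by simp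

lemma dl_pos: assumes "\<And>k. k + 1 < n \<Longrightarrow> 0 < w k" "i < j" "j < n"
  shows "0 < dist_line w i j"
proof -
  have "dist_line w i j = (\<Sum>k\<in>{i..<j}. w k)" unfolding dist_line_def using assms by simp
  also have "\<dots> > 0" using assms by (intro sum_pos) auto
  finally show ?thesis .
qed

lemma chain:
  fixes p :: "nat \<Rightarrow> real"
  assumes fin: "finite V"
  and adj: "\<forall>u\<in>V. \<forall>v\<in>V. u < v \<and> (\<forall>x\<in>{u<..<v}. x \<notin> V) \<longrightarrow>
        - dist_line w u v < p u - p v \<and> p u - p v < dist_line w u v"
  shows "u \<in> V \<Longrightarrow> y \<in> V \<Longrightarrow> u < y \<Longrightarrow> \<bar>p u - p y\<bar> < dist_line w u y"
proof (induction y rule: less_induct)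
  case (less y)
  define S where "S = {x\<in>V. u \<le> x \<and> x < y}"
  have fS: "finite S" "S \<noteq> {}" using fin less.prems by (auto simp: S_def)
  define z where "z = Max S"
  have zS: "z \<in> S" using fS by (simp add: z_def)
  have zmax: "\<forall>x\<in>{z<..<y}. x \<notin> V"
  proof (intro ballI notI)
    fix x assume x: "x \<in> {z<..<y}" "x \<in> V"
    then have "x \<in> S" using zS S_def by auto
    then have "x \<le> z" using fS z_def by simp
    then show False using x by simp
  qed
  have zy: "\<bar>p z - p y\<bar> < dist_line w z y"
  proof -
    have "z \<in> V" "z < y" using zS S_def by auto
    then have "- dist_line w z y < p z - p y \<and> p z - p y < dist_line w z y"
      using adj zmax less.prems(2) by blast
    then show ?thesis by (simp add: abs_less_iff)
  qed
  show ?case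
  proof (cases "z = u")
    case True then show ?thesis using zy by simp
  next
    case False
    then have "u < z" using zS S_def by auto
    then have "\<bar>p u - p z\<bar> < dist_line w u z" using less.IH[of z] zS S_def less.prems by auto
    moreover have "dist_line w u y = dist_line w u z + dist_line w z y"
      using \<open>u < z\<close> zS S_def by (intro dl_add) auto
    ultimately show ?thesis using zy by linarith
  qed
qed

lemma char:
  fixes p :: "nat \<Rightarrow> real"
  assumes good: "\<forall>u\<in>vacant n occ. \<forall>y\<in>vacant n occ. u < y \<longrightarrow> \<bar>p u - p y\<bar> < dist_line w u y"
  and L: "vL \<in> vacant n occ" and R: "vR \<in> vacant n occ" and o: "vL < v" "v < vR"
  and btw: "\<forall>x\<in>{vL<..<vR}. x \<notin> vacant n occ"
  shows "parks_at n occ w p v vL \<longleftrightarrow> dist_line w v vL + p vL < dist_line w v vR + p vR"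
    and "parks_at n occ w p v vR \<longleftrightarrow> dist_line w v vR + p vR < dist_line w v vL + p vL"
proof -
  have side: "y < vL \<or> vR < y \<or> y = vL \<or> y = vR" if "y \<in> vacant n occ" for y
    using btw that by (metis greaterThanLessThan_iff linorder_neqE_nat)
  have left: "dist_line w v vL + p vL < dist_line w v y + p y" if "y \<in> vacant n occ" "y < vL" for y
  proof -
    have "\<bar>p y - p vL\<bar> < dist_line w y vL" using good that L by auto
    moreover have "dist_line w v y = dist_line w v vL + dist_line w vL y"
      using dl_add[of y vL v w] that o by (simp add: dl_sym)
    ultimately show ?thesis by (simp add: dl_sym)
  qed
  have right: "dist_line w v vR + p vR < dist_line w v y + p y" if "y \<in> vacant n occ" "vR < y" for y
  proof -
    have "\<bar>p vR - p y\<bar> < dist_line w vR y" using good that R by auto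
    moreover have "dist_line w v y = dist_line w v vR + dist_line w vR y"
      using dl_add[of v vR y w] that o by simp
    ultimately show ?thesis by linarith
  qed
  show "parks_at n occ w p v vL \<longleftrightarrow> dist_line w v vL + p vL < dist_line w v vR + p vR"
  proof
    assume "parks_at n occ w p v vL" then show "dist_line w v vL + p vL < dist_line w v vR + p vR"
      unfolding parks_at_def using R o by auto
  next
    assume h: "dist_line w v vL + p vL < dist_line w v vR + p vR"
    show "parks_at n occ w p v vL" unfolding parks_at_def
    proof (intro conjI ballI impI)
      fix y assume y: "y \<in> vacant n occ" "y \<noteq> vL"
      show "dist_line w v vL + p vL < dist_line w v y + p y"
        using side[OF y(1)] y left[of y] right[of y] h by force
    qed (rule L)
  qed
  show "parks_at n occ w p v vR \<longleftrightarrow> dist_line w v vR + p vR < dist_line w v vL + p vL"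
  proof
    assume "parks_at n occ w p v vR" then show "dist_line w v vR + p vR < dist_line w v vL + p vL"
      unfolding parks_at_def using L o by auto
  next
    assume h: "dist_line w v vR + p vR < dist_line w v vL + p vL"
    show "parks_at n occ w p v vR" unfolding parks_at_def
    proof (intro conjI ballI impI)
      fix y assume y: "y \<in> vacant n occ" "y \<noteq> vR"
      show "dist_line w v vR + p vR < dist_line w v y + p y"
        using side[OF y(1)] y left[of y] right[of y] h by force
    qed (rule R)
  qed
qed

theorem lemma6:
  fixes M :: "'w measure" and n :: nat and occ :: "nat set" and w :: "nat \<Rightarrow> real"
    and P :: "'w \<Rightarrow> nat \<Rightarrow> real"
  assumes "prob_space M"
    and "occ \<subseteq> {..<n}"
    and "\<And>k. k + 1 < n \<Longrightarrow> 0 < w k"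
    and "\<And>x. x \<in> vacant n occ \<Longrightarrow> (\<lambda>\<omega>. P \<omega> x) \<in> borel_measurable M"
    and "\<And>\<omega> x. \<omega> \<in> space M \<Longrightarrow> x \<in> vacant n occ \<Longrightarrow> 0 \<le> P \<omega> x"
    and "harmonic_payment M n occ w P"
  shows "(\<forall>g \<in> vacant n occ. AE \<omega> in M. parks_at n occ w (P \<omega>) g g) \<and>
    (\<forall>v vL vR. v \<in> occ \<and> vL \<in> vacant n occ \<and> vR \<in> vacant n occ \<and> vL < v \<and> v < vR \<and>
        (\<forall>x\<in>{vL<..<vR}. x \<in> occ) \<longrightarrow>
       measure M {\<omega> \<in> space M. parks_at n occ w (P \<omega>) v vL}
         = dist_line w v vR / (dist_line w v vL + dist_line w v vR) \<and>
       measure M {\<omega> \<in> space M. parks_at n occ w (P \<omega>) v vR}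
         = dist_line w v vL / (dist_line w v vL + dist_line w v vR))"
proof -
  define V where "V = vacant n occ"
  have finV: "finite V" unfolding V_def vacant_def by simp
  have H1: "\<And>a b. is_block n occ a b \<and> 0 < a \<and> b + 1 < n \<Longrightarrow>
        distr M lborel (\<lambda>\<omega>. P \<omega> (a - 1) - P \<omega> (b + 1))
          = uniform_measure lborel {- dist_line w (a - 1) (b + 1) .. dist_line w (a - 1) (b + 1)}"
    using assms(6) unfolding harmonic_payment_def by blast
  have H2: "AE \<omega> in M. \<forall>u\<in>V. \<forall>v\<in>V. u < v \<and> (\<forall>x\<in>{u<..<v}. x \<notin> V) \<longrightarrow>
        - dist_line w u v < P \<omega> u - P \<omega> v \<and> P \<omega> u - P \<omega> v < dist_line w u v"
    using assms(6) unfolding harmonic_payment_def V_def by blast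
  have good: "AE \<omega> in M. \<forall>u\<in>V. \<forall>y\<in>V. u < y \<longrightarrow> \<bar>P \<omega> u - P \<omega> y\<bar> < dist_line w u y"
    using H2 by eventually_elim (use chain[OF finV] in blast)
  have part1: "\<forall>g \<in> vacant n occ. AE \<omega> in M. parks_at n occ w (P \<omega>) g g"
  proof
    fix g assume g: "g \<in> vacant n occ"
    show "AE \<omega> in M. parks_at n occ w (P \<omega>) g g"
      using good
    proof eventually_elim
      case (elim \<omega>)
      show ?case unfolding parks_at_def
      proof (intro conjI ballI impI)
        fix y assume y: "y \<in> vacant n occ" "y \<noteq> g"
        show "dist_line w g g + P \<omega> g < dist_line w g y + P \<omega> y"
        proof (cases "y < g")
          case True
          then have "\<bar>P \<omega> y - P \<omega> g\<bar> < dist_line w y g" using elim y g V_def by auto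
          then show ?thesis by (simp add: dl_zero dl_sym)
        next
          case False
          then have "g < y" using y by auto
          then have "\<bar>P \<omega> g - P \<omega> y\<bar> < dist_line w g y" using elim y g V_def by auto
          then show ?thesis by (simp add: dl_zero)
        qed
      qed (rule g)
    qed
  qed
  have part2: "measure M {\<omega> \<in> space M. parks_at n occ w (P \<omega>) v vL}
         = dist_line w v vR / (dist_line w v vL + dist_line w v vR) \<and>
       measure M {\<omega> \<in> space M. parks_at n occ w (P \<omega>) v vR}
         = dist_line w v vL / (dist_line w v vL + dist_line w v vR)"
    if hyp: "v \<in> occ" "vL \<in> vacant n occ" "vR \<in> vacant n occ" "vL < v" "v < vR"
        "\<forall>x\<in>{vL<..<vR}. x \<in> occ" for v vL vR
  proof -
    have vRn: "vR < n" using hyp(3) unfolding vacant_def by auto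
    define dL where "dL = dist_line w v vL"
    define dR where "dR = dist_line w v vR"
    define D where "D = dist_line w vL vR"
    have dLp: "0 < dL" unfolding dL_def using dl_pos[OF assms(3), where i=vL and j=v] hyp vRn
      by (simp add: dl_sym)
    have dRp: "0 < dR" unfolding dR_def using dl_pos[OF assms(3), where i=v and j=vR] hyp vRn by simp
    have D: "D = dL + dR" unfolding D_def dL_def dR_def
      using dl_add[of vL v vR w] hyp by (simp add: dl_sym)
    define X where "X = (\<lambda>\<omega>. P \<omega> vL - P \<omega> vR)"
    have mL[measurable]: "(\<lambda>\<omega>. P \<omega> vL) \<in> borel_measurable M" using assms(4) hyp by auto
    have mR[measurable]: "(\<lambda>\<omega>. P \<omega> vR) \<in> borel_measurable M" using assms(4) hyp by auto
    have mX[measurable]: "X \<in> borel_measurable M" unfolding X_def by measurable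
    have blk: "is_block n occ (vL + 1) (vR - 1)"
      unfolding is_block_def using hyp vRn unfolding vacant_def by auto
    have dist: "distr M lborel X = uniform_measure lborel {-D..D}"
      using H1[of "vL + 1" "vR - 1"] blk vRn hyp unfolding X_def D_def by auto
    have btw: "\<forall>x\<in>{vL<..<vR}. x \<notin> vacant n occ" using hyp(6) unfolding vacant_def by auto
    have gd: "AE \<omega> in M. \<forall>u\<in>vacant n occ. \<forall>y\<in>vacant n occ. u < y \<longrightarrow> \<bar>P \<omega> u - P \<omega> y\<bar> < dist_line w u y"
      using good unfolding V_def .
    have meas: "{\<omega> \<in> space M. parks_at n occ w (P \<omega>) v x} \<in> sets M" if x: "x \<in> vacant n occ" for x
    proof -
      have mx[measurable]: "(\<lambda>\<omega>. P \<omega> x) \<in> borel_measurable M" using assms(4) x by auto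
      have "{\<omega> \<in> space M. parks_at n occ w (P \<omega>) v x} =
        {\<omega> \<in> space M. \<forall>y\<in>vacant n occ. y \<noteq> x \<longrightarrow> dist_line w v x + P \<omega> x < dist_line w v y + P \<omega> y}"
        unfolding parks_at_def using x by auto
      also have "\<dots> \<in> sets M"
      proof (rule sets.sets_Collect_finite_All)
        fix y assume y: "y \<in> vacant n occ"
        have my[measurable]: "(\<lambda>\<omega>. P \<omega> y) \<in> borel_measurable M" using assms(4) y by auto
        show "{\<omega> \<in> space M. y \<noteq> x \<longrightarrow> dist_line w v x + P \<omega> x < dist_line w v y + P \<omega> y} \<in> sets M"
          by measurable
      next
        show "finite (vacant n occ)" unfolding vacant_def by simp
      qed
      finally show ?thesis .
    qed
    have lbD: "measure lborel {-D..D} = 2 * D" using dLp dRp D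
      by (simp add: measure_def)
    have eD: "emeasure lborel {-D..D} \<noteq> 0" "emeasure lborel {-D..D} \<noteq> \<infinity>" using dLp dRp D
      by simp_all
    define c where "c = dR - dL"
    have probL: "measure M {\<omega> \<in> space M. X \<omega> < c} = dR / (dL + dR)"
    proof -
      have "measure M {\<omega> \<in> space M. X \<omega> < c} = measure (distr M lborel X) {..<c}"
        by (subst measure_distr) (auto intro: arg_cong[where f="measure M"])
      also have "\<dots> = measure lborel ({-D..D} \<inter> {..<c}) / measure lborel {-D..D}"
        unfolding dist using eD by simp
      also have "{-D..D} \<inter> {..<c} = {-D..<c}" using dLp dRp D c_def by auto
      also have "measure lborel {-D..<c} = c + D" using dLp dRp D c_def
        by (simp add: measure_def)
      finally have "measure M {\<omega> \<in> space M. X \<omega> < c} = (c + D) / (2 * D)" using lbD by simp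
      moreover have "c + D = 2 * dR" using D c_def by simp
      ultimately show ?thesis using D dLp dRp by (simp add: field_simps)
    qed
    have probR: "measure M {\<omega> \<in> space M. X \<omega> > c} = dL / (dL + dR)"
    proof -
      have "measure M {\<omega> \<in> space M. X \<omega> > c} = measure (distr M lborel X) {c<..}"
        by (subst measure_distr) (auto intro: arg_cong[where f="measure M"])
      also have "\<dots> = measure lborel ({-D..D} \<inter> {c<..}) / measure lborel {-D..D}"
        unfolding dist using eD by simp
      also have "{-D..D} \<inter> {c<..} = {c<..D}" using dLp dRp D c_def by auto
      also have "measure lborel {c<..D} = D - c" using dLp dRp D c_def
        by (simp add: measure_def)
      finally have "measure M {\<omega> \<in> space M. X \<omega> > c} = (D - c) / (2 * D)" using lbD by simp
      moreover have "D - c = 2 * dL" using D c_def by simp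
      ultimately show ?thesis using D dLp dRp by (simp add: field_simps)
    qed
    have eqL: "measure M {\<omega> \<in> space M. parks_at n occ w (P \<omega>) v vL} = measure M {\<omega> \<in> space M. X \<omega> < c}"
    proof (rule measure_eq_AE)
      show "AE \<omega> in M. (\<omega> \<in> {\<omega> \<in> space M. parks_at n occ w (P \<omega>) v vL}) = (\<omega> \<in> {\<omega> \<in> space M. X \<omega> < c})"
        using gd
      proof eventually_elim
        case (elim \<omega>)
        show ?case using char(1)[OF elim hyp(2,3,4,5) btw] unfolding X_def c_def dL_def dR_def
          by auto
      qed
      show "{\<omega> \<in> space M. parks_at n occ w (P \<omega>) v vL} \<in> sets M" using meas hyp by auto
      show "{\<omega> \<in> space M. X \<omega> < c} \<in> sets M" by measurable
    qed
    have eqR: "measure M {\<omega> \<in> space M. parks_at n occ w (P \<omega>) v vR} = measure M {\<omega> \<in> space M. X \<omega> > c}"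
    proof (rule measure_eq_AE)
      show "AE \<omega> in M. (\<omega> \<in> {\<omega> \<in> space M. parks_at n occ w (P \<omega>) v vR}) = (\<omega> \<in> {\<omega> \<in> space M. X \<omega> > c})"
        using gd
      proof eventually_elim
        case (elim \<omega>)
        show ?case using char(2)[OF elim hyp(2,3,4,5) btw] unfolding X_def c_def dL_def dR_def
          by auto
      qed
      show "{\<omega> \<in> space M. parks_at n occ w (P \<omega>) v vR} \<in> sets M" using meas hyp by auto
      show "{\<omega> \<in> space M. X \<omega> > c} \<in> sets M" by measurable
    qed
    show ?thesis using eqL eqR probL probR unfolding dL_def dR_def by simp
  qed
  show ?thesis using part1 part2 by blast
qed

end
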